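(* Let $\mathbf K$ be a tridiagonal, irreducible, row-stochastic and reversible transition matrix with stationary distribution $\boldsymbol\pi$, and let $\mathbf e_i$ denote the probability vector concentrated on the $i$-th state. Then for adjacent sites, $$\mathcal W_N(\mathbf e_i,\mathbf e_{i+1})=\int_0^1\frac{dr}{\sqrt{\beta\big(K_{i+1,i}\,r,\;K_{i,i+1}(1-r)\big)}} .$$
   Context: $\mathbf K$ row-stochastic, irreducible, reversible means $\sum_jK_{ij}=1$, and there is a positive probability vector $\boldsymbol\pi$ with $\pi_iK_{ij}=\pi_jK_{ji}$ for all $i,j$. $\beta$ is the logarithmic mean: $\beta(x,y)=\frac{x-y}{\log x-\log y}$ if $x\ne y$, $\beta(x,x)=x$. Discrete Wasserstein distance (Maas): for probability densities $\mathbf Q^0,\mathbf Q^1$ with respect to $\boldsymbol\pi$ (nonnegative vectors with $\sum_iQ_i\pi_i=1$), $\mathcal W_N^2(\mathbf Q^0,\mathbf Q^1)$ is the infimum of $\frac12\int_0^1\sum_{i,j}|\psi_i^\tau-\psi_j^\tau|^2K_{ij}\beta(Q_i^\tau,Q_j^\tau)\pi_i\,d\tau$ over all piecewise $C^1$ curves $\tau\mapsto\mathbf Q^\tau\in\mathbb R_+^n$ of probability densities and measurable $\tau\mapsto\boldsymbol\psi^\tau\in\mathbb R^n$ satisfying $\frac{d}{d\tau}Q_i^\tau+\sum_j(\psi_j^\tau-\psi_i^\tau)K_{ij}\beta(Q_i^\tau,Q_j^\tau)=0$ for a.e. $\tau$ and all $i$, with $\mathbf Q^\tau|_{\tau=0}=\mathbf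 Q^0$, $\mathbf Q^\tau|_{\tau=1}=\mathbf Q^1$. For probability vectors $\mathbf q^0,\mathbf q^1$ one sets $\mathcal W_N(\mathbf q^0,\mathbf q^1):=\mathcal W_N(\mathbf q^0/\boldsymbol\pi,\mathbf q^1/\boldsymbol\pi)$ (entrywise division). *)

theory Defs
  imports "HOL-Analysis.Analysis"
begin

text \<open>States are indexed by 0..n-1; a matrix is a function nat => nat => real,
  a vector is a function nat => real (entries outside 0..n-1 are irrelevant).\<close>

definition log_mean :: "real \<Rightarrow> real \<Rightarrow> real" where
  "log_mean x y = (if x = y then x
     else if x \<le> 0 \<or> y \<le> 0 then 0
     else (x - y) / (ln x - ln y))"

definition row_stochastic :: "nat \<Rightarrow> (nat \<Rightarrow> nat \<Rightarrow> real) \<Rightarrow> bool" where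
  "row_stochastic n K \<longleftrightarrow> (\<forall>i<n. \<forall>j<n. K i j \<ge> 0) \<and> (\<forall>i<n. (\<Sum>j<n. K i j) = 1)"

definition irreducible_mat :: "nat \<Rightarrow> (nat \<Rightarrow> nat \<Rightarrow> real) \<Rightarrow> bool" where
  "irreducible_mat n K \<longleftrightarrow>
     (\<forall>i<n. \<forall>j<n. (i, j) \<in> {(a, b). a < n \<and> b < n \<and> K a b > 0}\<^sup>*)"

definition tridiagonal :: "nat \<Rightarrow> (nat \<Rightarrow> nat \<Rightarrow> real) \<Rightarrow> bool" where
  "tridiagonal n K \<longleftrightarrow> (\<forall>i<n. \<forall>j<n. i + 1 < j \<or> j + 1 < i \<longrightarrow> K i j = 0)"

definition reversible_wrt :: "nat \<Rightarrow> (nat \<Rightarrow> nat \<Rightarrow> real) \<Rightarrow> (nat \<Rightarrow> real) \<Rightarrow> bool" where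
  "reversible_wrt n K \<pi> \<longleftrightarrow> (\<forall>i<n. \<pi> i > 0) \<and> (\<Sum>i<n. \<pi> i) = 1 \<and>
     (\<forall>i<n. \<forall>j<n. \<pi> i * K i j = \<pi> j * K j i)"

definition prob_density :: "nat \<Rightarrow> (nat \<Rightarrow> real) \<Rightarrow> (nat \<Rightarrow> real) \<Rightarrow> bool" where
  "prob_density n \<pi> Q \<longleftrightarrow> (\<forall>i<n. Q i \<ge> 0) \<and> (\<Sum>i<n. Q i * \<pi> i) = 1"

definition admissible_path ::
  "nat \<Rightarrow> (nat \<Rightarrow> nat \<Rightarrow> real) \<Rightarrow> (nat \<Rightarrow> real) \<Rightarrow> (nat \<Rightarrow> real) \<Rightarrow> (nat \<Rightarrow> real)
   \<Rightarrow> (real \<Rightarrow> nat \<Rightarrow> real) \<Rightarrow> (real \<Rightarrow> nat \<Rightarrow> real) \<Rightarrow> bool" where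
  "admissible_path n K \<pi> Q0 Q1 Q \<psi> \<longleftrightarrow>
     (\<forall>i<n. (\<lambda>\<tau>. Q \<tau> i) piecewise_C1_differentiable_on {0..1}) \<and>
     (\<forall>\<tau>\<in>{0..1}. prob_density n \<pi> (Q \<tau>)) \<and>
     (\<forall>i<n. (\<lambda>\<tau>. \<psi> \<tau> i) \<in> borel_measurable lborel) \<and>
     (AE \<tau> in lborel. \<tau> \<in> {0..1} \<longrightarrow> (\<forall>i<n.
        ((\<lambda>t. Q t i) has_real_derivative
          - (\<Sum>j<n. (\<psi> \<tau> j - \<psi> \<tau> i) * K i j * log_mean (Q \<tau> i) (Q \<tau> j))) (at \<tau>))) \<and>
     (\<forall>i<n. Q 0 i = Q0 i \<and> Q 1 i = Q1 i)"

definition action ::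
  "nat \<Rightarrow> (nat \<Rightarrow> nat \<Rightarrow> real) \<Rightarrow> (nat \<Rightarrow> real) \<Rightarrow> (real \<Rightarrow> nat \<Rightarrow> real)
   \<Rightarrow> (real \<Rightarrow> nat \<Rightarrow> real) \<Rightarrow> ennreal" where
  "action n K \<pi> Q \<psi> = (\<integral>\<^sup>+ \<tau>\<in>{0..1}.
      ennreal ((1/2) * (\<Sum>i<n. \<Sum>j<n. (\<psi> \<tau> i - \<psi> \<tau> j)\<^sup>2 * K i j
                  * log_mean (Q \<tau> i) (Q \<tau> j) * \<pi> i)) \<partial>lborel)"

definition W_N_sq_dens ::
  "nat \<Rightarrow> (nat \<Rightarrow> nat \<Rightarrow> real) \<Rightarrow> (nat \<Rightarrow> real) \<Rightarrow> (nat \<Rightarrow> real) \<Rightarrow> (nat \<Rightarrow> real) \<Rightarrow> ennreal" where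
  "W_N_sq_dens n K \<pi> Q0 Q1 =
     (INF p \<in> {(Q, \<psi>). admissible_path n K \<pi> Q0 Q1 Q \<psi>}. action n K \<pi> (fst p) (snd p))"

definition W_N_dens ::
  "nat \<Rightarrow> (nat \<Rightarrow> nat \<Rightarrow> real) \<Rightarrow> (nat \<Rightarrow> real) \<Rightarrow> (nat \<Rightarrow> real) \<Rightarrow> (nat \<Rightarrow> real) \<Rightarrow> real" where
  "W_N_dens n K \<pi> Q0 Q1 = sqrt (enn2real (W_N_sq_dens n K \<pi> Q0 Q1))"

definition W_N_prob ::
  "nat \<Rightarrow> (nat \<Rightarrow> nat \<Rightarrow> real) \<Rightarrow> (nat \<Rightarrow> real) \<Rightarrow> (nat \<Rightarrow> real) \<Rightarrow> (nat \<Rightarrow> real) \<Rightarrow> real" where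
  "W_N_prob n K \<pi> q0 q1 = W_N_dens n K \<pi> (\<lambda>i. q0 i / \<pi> i) (\<lambda>i. q1 i / \<pi> i)"

definition unit_vec :: "nat \<Rightarrow> nat \<Rightarrow> real" where
  "unit_vec i = (\<lambda>j. if j = i then 1 else 0)"

end

theory Submission
  imports Defs
begin

lemma lm_sym: "log_mean x y = log_mean y x"
  unfolding log_mean_def by (auto simp: divide_simps) (auto simp: algebra_simps)

lemma lm_zero1: "0 \<le> x \<Longrightarrow> log_mean 0 x = 0"
  unfolding log_mean_def by auto

lemma lm_zero2: "0 \<le> x \<Longrightarrow> log_mean x 0 = 0"
  unfolding log_mean_def by auto

lemma lm_pos: assumes "x > 0" "y > 0" shows "log_mean x y > 0"
proof (cases "x = y")
  case True then show ?thesis using assms by (simp add: log_mean_def)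
next
  case False
  show ?thesis
  proof (cases "x < y")
    case True
    then have "ln x < ln y" using assms by simp
    then show ?thesis using True assms False by (simp add: log_mean_def divide_neg_neg)
  next
    case f: False
    then have "y < x" using False by simp
    then have "ln y < ln x" using assms by simp
    then show ?thesis using \<open>y < x\<close> assms False by (simp add: log_mean_def)
  qed
qed

lemma lm_nonneg: assumes "x \<ge> 0" "y \<ge> 0" shows "log_mean x y \<ge> 0"
proof (cases "x > 0 \<and> y > 0")
  case True then show ?thesis using lm_pos[of x y] by simp
next
  case False then show ?thesis using assms by (auto simp: log_mean_def)
qed

lemma lm_hom: assumes "c > 0" shows "log_mean (c*x) (c*y) = c * log_mean x y"
proof -
  have "x \<le> 0 \<or> y \<le> 0 \<longleftrightarrow> c*x \<le> 0 \<or> c*y \<le> 0" using assms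
    by (simp add: mult_le_0_iff)
  moreover have "c * x = c * y \<longleftrightarrow> x = y" using assms by simp
  moreover have "x > 0 \<Longrightarrow> y > 0 \<Longrightarrow> ln (c*x) - ln (c*y) = ln x - ln y"
    using assms by (simp add: ln_mult)
  ultimately show ?thesis unfolding log_mean_def
    by (auto simp: algebra_simps not_le)
qed

definition ell :: "real \<Rightarrow> real" where "ell u = log_mean u 1"

lemma lm_ell: assumes "x > 0" "y > 0" shows "log_mean x y = y * ell (x / y)"
  using lm_hom[of y "x/y" 1] assms by (simp add: ell_def)

lemma ell_eq: "u > 0 \<Longrightarrow> u \<noteq> 1 \<Longrightarrow> ell u = (u - 1) / ln u"
  by (simp add: ell_def log_mean_def)

lemma ell_one: "ell 1 = 1" by (simp add: ell_def log_mean_def)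

lemma ell_cont: assumes "u > 0" shows "isCont ell u"
proof (cases "u = 1")
  case True
  have d: "((\<lambda>y::real. (ln y - ln 1) / (y - 1)) \<longlongrightarrow> 1) (at 1)"
  proof -
    have "DERIV (ln::real\<Rightarrow>real) 1 :> 1" using DERIV_ln[of 1] by simp
    then show ?thesis unfolding has_field_derivative_iff by simp
  qed
  have "((\<lambda>y::real. inverse ((ln y - ln 1) / (y - 1))) \<longlongrightarrow> inverse 1) (at 1)"
    by (rule tendsto_inverse[OF d]) simp
  then have l: "((\<lambda>y::real. (y - 1) / ln y) \<longlongrightarrow> 1) (at 1)" by simp
  have ev: "eventually (\<lambda>y::real. (y - 1) / ln y = ell y) (at 1)"
    unfolding eventually_at
    by (rule exI[of _ "1/2"]) (auto simp: dist_real_def abs_if split: if_splits intro!: ell_eq[symmetric])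
  have "(ell \<longlongrightarrow> 1) (at 1)" using tendsto_cong[OF ev] l by simp
  then show ?thesis using True by (simp add: isCont_def ell_one)
next
  case False
  have ev: "eventually (\<lambda>y. (y - 1) / ln y = ell y) (nhds u)"
  proof -
    have "eventually (\<lambda>y. y \<in> {0<..} - {1}) (nhds u)"
      by (rule eventually_nhds_in_open) (use assms False in auto)
    then show ?thesis by (rule eventually_mono) (auto simp: ell_eq)
  qed
  have "isCont (\<lambda>y. (y - 1) / ln y) u"
    using assms False by (intro continuous_intros) auto
  then show ?thesis using isCont_cong[OF ev] by simp
qed

lemma ell_deriv:
  assumes "u > 0" "u \<noteq> 1"
  shows "\<exists>D. DERIV ell u :> D \<and> D \<ge> 0"
proof -
  have lnu: "ln u \<noteq> 0" using assms by simp
  have d: "DERIV (\<lambda>y. (y - 1) / ln y) u :> (1 * ln u - (u - 1) * (1/u)) / (ln u * ln u)"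
    by (rule derivative_eq_intros refl | use assms lnu in simp)+
  have d2: "DERIV ell u :> (1 * ln u - (u - 1) * (1/u)) / (ln u * ln u)"
    by (rule has_field_derivative_transform_within_open[OF d, of "{0<..} - {1}"])
       (use assms in \<open>auto simp: ell_eq\<close>)
  have "ln (1/u) \<le> 1/u - 1" by (rule ln_le_minus_one) (use assms in simp)
  then have "ln u \<ge> (u - 1) * (1/u)" using assms by (simp add: ln_div field_simps)
  then have "(1 * ln u - (u - 1) * (1/u)) / (ln u * ln u) \<ge> 0" by simp
  with d2 show ?thesis by blast
qed

lemma ell_cont_on: "A \<subseteq> {0<..} \<Longrightarrow> continuous_on A ell"
  using ell_cont by (intro continuous_at_imp_continuous_on) auto

lemma ell_mono_aux:
  assumes "0 < a" "a \<le> b" "b \<le> 1 \<or> a \<ge> 1"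
  shows "ell a \<le> ell b"
  by (rule DERIV_nonneg_imp_increasing_open[OF assms(2)])
     (use assms ell_deriv in \<open>auto intro!: ell_cont_on\<close>)

lemma ell_mono:
  assumes "0 < a" "a \<le> b"
  shows "ell a \<le> ell b"
proof (cases "b \<le> 1 \<or> a \<ge> 1")
  case True then show ?thesis using ell_mono_aux[OF assms] by blast
next
  case False
  then have "a < 1" "1 < b" by auto
  have "ell a \<le> ell 1" by (rule ell_mono_aux) (use assms \<open>a < 1\<close> in auto)
  moreover have "ell 1 \<le> ell b" by (rule ell_mono_aux) (use \<open>1 < b\<close> in auto)
  ultimately show ?thesis by linarith
qed

lemma lm_mono1:
  assumes "0 \<le> x" "x \<le> x'" "0 \<le> y"
  shows "log_mean x y \<le> log_mean x' y"
proof (cases "x = 0 \<or> y = 0")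
  case True
  have "log_mean x' y \<ge> 0" by (rule lm_nonneg) (use assms in auto)
  moreover have "log_mean x y = 0" using True assms by (auto simp: lm_zero1 lm_zero2)
  ultimately show ?thesis by simp
next
  case False
  then have xy: "x > 0" "y > 0" "x' > 0" using assms by auto
  have "x/y \<le> x'/y" using assms xy by (simp add: divide_right_mono)
  then have "ell (x/y) \<le> ell (x'/y)" using xy by (intro ell_mono) auto
  then have "y * ell (x/y) \<le> y * ell (x'/y)" using xy by (intro mult_left_mono) auto
  then show ?thesis using xy by (simp add: lm_ell)
qed

lemma lm_mono:
  assumes "0 \<le> x" "x \<le> x'" "0 \<le> y" "y \<le> y'"
  shows "log_mean x y \<le> log_mean x' y'"
proof -
  have "log_mean x y \<le> log_mean x' y" by (rule lm_mono1) (use assms in auto)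
  also have "\<dots> = log_mean y x'" by (rule lm_sym)
  also have "\<dots> \<le> log_mean y' x'" by (rule lm_mono1) (use assms in auto)
  also have "\<dots> = log_mean x' y'" by (rule lm_sym)
  finally show ?thesis .
qed

lemma lm_min: assumes "0 \<le> x" "0 \<le> y" shows "log_mean x y \<ge> min x y"
  using lm_mono[of "min x y" x "min x y" y] assms by (simp add: log_mean_def)

lemma lm_measurable[measurable]:
  assumes [measurable]: "f \<in> borel_measurable M" "g \<in> borel_measurable M"
  shows "(\<lambda>x. log_mean (f x) (g x)) \<in> borel_measurable M"
  unfolding log_mean_def by measurable


definition hh :: "real \<Rightarrow> real \<Rightarrow> real \<Rightarrow> real" where
  "hh p q r = log_mean (p*r) (q*(1-r))"
definition gg :: "real \<Rightarrow> real \<Rightarrow> real \<Rightarrow> real" where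
  "gg p q r = 1 / sqrt (hh p q r)"
definition GG :: "real \<Rightarrow> real \<Rightarrow> real \<Rightarrow> real" where
  "GG p q y = integral {0..y} (gg p q)"

context fixes p q :: real assumes pq: "p > 0" "q > 0"
begin

lemma hh_pos: "0 < r \<Longrightarrow> r < 1 \<Longrightarrow> hh p q r > 0"
  unfolding hh_def using pq by (intro lm_pos) auto

lemma hh_cont: assumes "0 < r" "r < 1" shows "isCont (hh p q) r"
proof -
  have e: "hh p q x = q*(1-x) * ell (p*x/(q*(1-x)))" if "x \<in> {0<..<1}" for x
    using that pq unfolding hh_def by (subst lm_ell) auto
  have "isCont (\<lambda>x. q*(1-x) * ell (p*x/(q*(1-x)))) r"
  proof -
    have c1: "isCont (\<lambda>x. p*x/(q*(1-x))) r" using assms pq by (intro continuous_intros) auto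
    have "p*r/(q*(1-r)) > 0" using assms pq by auto
    then have c2: "isCont ell (p*r/(q*(1-r)))" by (rule ell_cont)
    have "isCont (\<lambda>x. ell (p*x/(q*(1-x)))) r"
      using continuous_at_compose[OF c1 c2] by (simp add: o_def)
    then show ?thesis by (intro continuous_intros)
  qed
  then show ?thesis
    by (rule isCont_cong[THEN iffD1, rotated])
       (rule eventually_mono[OF eventually_nhds_in_open[of "{0<..<1}"]], use assms e in auto)
qed

lemma gg_cont: assumes "0 < r" "r < 1" shows "isCont (gg p q) r"
  unfolding gg_def using hh_cont[OF assms] hh_pos[OF assms]
  by (intro continuous_intros) (auto simp: o_def)

lemma hh_nonneg: "0 \<le> r \<Longrightarrow> r \<le> 1 \<Longrightarrow> hh p q r \<ge> 0"
  unfolding hh_def using pq by (intro lm_nonneg) auto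

lemma gg_nonneg: "0 \<le> r \<Longrightarrow> r \<le> 1 \<Longrightarrow> gg p q r \<ge> 0"
  unfolding gg_def using hh_nonneg by simp

lemma gg_measurable[measurable]: "gg p q \<in> borel_measurable borel"
  unfolding gg_def hh_def by measurable

lemma gg_meas_leb: "gg p q \<in> borel_measurable (lebesgue_on S)"
  by (rule measurable_restrict_space1, rule measurable_completion) simp

lemma gg_bound:
  assumes "0 \<le> r" "r \<le> 1"
  shows "\<bar>gg p q r\<bar> \<le> 1/sqrt p * (1/sqrt r) + 1/sqrt q * (1/sqrt (1-r))"
proof -
  have B0: "0 \<le> 1/sqrt p * (1/sqrt r)" "0 \<le> 1/sqrt q * (1/sqrt (1-r))"
    using assms pq by auto
  show ?thesis
  proof (cases "r = 0 \<or> r = 1")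
    case True
    then have "hh p q r = 0" unfolding hh_def using pq by (auto simp: lm_zero1 lm_zero2)
    then show ?thesis using B0 by (simp add: gg_def)
  next
    case False
    then have r: "0 < r" "r < 1" using assms by auto
    have m: "min (p*r) (q*(1-r)) > 0" using r pq by auto
    have "hh p q r \<ge> min (p*r) (q*(1-r))" unfolding hh_def
      by (rule lm_min) (use r pq in auto)
    then have "sqrt (hh p q r) \<ge> sqrt (min (p*r) (q*(1-r)))" by simp
    then have "1 / sqrt (hh p q r) \<le> 1 / sqrt (min (p*r) (q*(1-r)))"
      using m by (intro divide_left_mono) auto
    also have "\<dots> \<le> 1/sqrt p * (1/sqrt r) + 1/sqrt q * (1/sqrt (1-r))"
    proof (cases "p*r \<le> q*(1-r)")
      case True
      then show ?thesis using B0 by (simp add: real_sqrt_mult)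
    next
      case False
      then show ?thesis using B0 by (simp add: real_sqrt_mult)
    qed
    finally show ?thesis using gg_nonneg[OF assms] by (simp add: gg_def)
  qed
qed

end

lemma inv_sqrt_int: "((\<lambda>r. 1 / sqrt r) has_integral 2) {0..1}"
proof -
  have "((\<lambda>r. 1 / sqrt r) has_integral (2 * sqrt 1 - 2 * sqrt 0)) {0..1}"
  proof (rule fundamental_theorem_of_calculus_interior_strong[of "{}"])
    show "continuous_on {0..1} (\<lambda>r::real. 2 * sqrt r)" by (intro continuous_intros)
    fix x :: real assume "x \<in> {0<..<1} - {}"
    then have x: "x > 0" by auto
    have "DERIV (\<lambda>r. 2 * sqrt r) x :> 1 / sqrt x"
      using x by (auto intro!: derivative_eq_intros simp: divide_simps)
    then show "((\<lambda>r. 2 * sqrt r) has_vector_derivative 1 / sqrt x) (at x)"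
      by (simp add: has_real_derivative_iff_has_vector_derivative[symmetric])
  qed auto
  then show ?thesis by simp
qed

lemma inv_sqrt_int2: "((\<lambda>r. 1 / sqrt (1 - r)) has_integral 2) {0..1}"
proof -
  have "((\<lambda>r. 1 / sqrt (1 - r)) has_integral ((- 2 * sqrt (1 - 1)) - (- 2 * sqrt (1 - 0)))) {0..1}"
  proof (rule fundamental_theorem_of_calculus_interior_strong[of "{}"])
    show "continuous_on {0..1} (\<lambda>r::real. - 2 * sqrt (1 - r))" by (intro continuous_intros)
    fix x :: real assume "x \<in> {0<..<1} - {}"
    then have x: "x < 1" by auto
    have "DERIV (\<lambda>r. - 2 * sqrt (1 - r)) x :> 1 / sqrt (1 - x)"
      using x by (auto intro!: derivative_eq_intros simp: divide_simps)
    then show "((\<lambda>r. - 2 * sqrt (1 - r)) has_vector_derivative 1 / sqrt (1 - x)) (at x)"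
      by (simp add: has_real_derivative_iff_has_vector_derivative[symmetric])
  qed auto
  then show ?thesis by simp
qed

context fixes p q :: real assumes pq: "p > 0" "q > 0"
begin

lemma gg_integrable: "gg p q integrable_on {0..1}"
proof (rule measurable_bounded_by_integrable_imp_integrable_real)
  show "gg p q \<in> borel_measurable (lebesgue_on {0..1})" using gg_meas_leb pq by blast
  show "(\<lambda>r. 1/sqrt p * (1/sqrt r) + 1/sqrt q * (1/sqrt (1-r))) integrable_on {0..1}"
  proof -
    have "((\<lambda>r. 1/sqrt p * (1/sqrt r)) has_integral (1/sqrt p * 2)) {0..1}"
      by (rule has_integral_mult_right[OF inv_sqrt_int])
    moreover have "((\<lambda>r. 1/sqrt q * (1/sqrt (1-r))) has_integral (1/sqrt q * 2)) {0..1}"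
      by (rule has_integral_mult_right[OF inv_sqrt_int2])
    ultimately have "((\<lambda>r. 1/sqrt p * (1/sqrt r) + 1/sqrt q * (1/sqrt (1-r))) has_integral (1/sqrt p * 2 + 1/sqrt q * 2)) {0..1}"
      by (rule has_integral_add)
    then show ?thesis unfolding integrable_on_def by blast
  qed
  show "\<bar>gg p q x\<bar> \<le> 1/sqrt p * (1/sqrt x) + 1/sqrt q * (1/sqrt (1-x))" if "x \<in> {0..1}" for x
    using gg_bound[OF pq] that by auto
qed auto

lemma gg_LINT: "(LINT r:{0..1}|lborel. gg p q r) = integral {0..1} (gg p q)"
proof -
  have ai: "gg p q absolutely_integrable_on {0..1}"
    by (rule nonnegative_absolutely_integrable_1[OF gg_integrable]) (use gg_nonneg[OF pq] in auto)
  have "set_integrable lborel {0..1} (gg p q)"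
    using ai unfolding set_integrable_def
    by (subst (asm) integrable_completion) (use pq in auto)
  then show ?thesis by (rule set_borel_integral_eq_integral)
qed

end


definition mm :: "real \<Rightarrow> real \<Rightarrow> real \<Rightarrow> real" where
  "mm p q t = (THE y. y \<in> {0..1} \<and> GG p q y = GG p q 1 * t)"

context fixes p q :: real assumes pq: "p > 0" "q > 0"
begin

lemma GG_cont: "continuous_on {0..1} (GG p q)"
  unfolding GG_def by (rule indefinite_integral_continuous_1[OF gg_integrable[OF pq]])

lemma GG_0: "GG p q 0 = 0" by (simp add: GG_def)

lemma GG_1: "GG p q 1 = (LINT r:{0..1}|lborel. gg p q r)"
  by (simp add: GG_def gg_LINT[OF pq])

lemma GG_deriv: assumes "0 < y" "y < 1" shows "DERIV (GG p q) y :> gg p q y"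
proof -
  have "((\<lambda>u. integral {0..u} (gg p q)) has_vector_derivative gg p q y) (at y within ({0..1} - {}))"
    by (rule integral_has_vector_derivative_continuous_at[OF gg_integrable[OF pq]])
       (use assms gg_cont[OF pq assms] in \<open>auto intro: continuous_at_imp_continuous_at_within\<close>)
  then have "((\<lambda>u. integral {0..u} (gg p q)) has_vector_derivative gg p q y) (at y)"
    using at_within_interior[of y "{0..1::real}"] assms by simp
  then show ?thesis unfolding GG_def by (simp add: has_real_derivative_iff_has_vector_derivative)
qed

lemma GG_strict: assumes "0 \<le> x" "x < y" "y \<le> 1" shows "GG p q x < GG p q y"
proof (rule DERIV_pos_imp_increasing_open[OF assms(2)])
  fix z assume "x < z" "z < y"
  then have z: "0 < z" "z < 1" using assms by auto
  have "gg p q z > 0" unfolding gg_def using hh_pos[OF pq z] by simp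
  then show "\<exists>d. DERIV (GG p q) z :> d \<and> d > 0" using GG_deriv[OF z] by blast
next
  show "continuous_on {x..y} (GG p q)"
    by (rule continuous_on_subset[OF GG_cont]) (use assms in auto)
qed

lemma GG_mono: assumes "0 \<le> x" "x \<le> y" "y \<le> 1" shows "GG p q x \<le> GG p q y"
  using GG_strict[of x y] assms by (cases "x = y") auto

lemma L_pos: "GG p q 1 > 0" using GG_strict[of 0 1] GG_0 by simp

lemma mm_ex: assumes "0 \<le> t" "t \<le> 1"
  shows "mm p q t \<in> {0..1} \<and> GG p q (mm p q t) = GG p q 1 * t"
proof -
  have "\<exists>y. 0 \<le> y \<and> y \<le> 1 \<and> GG p q y = GG p q 1 * t"
    by (rule IVT'[OF _ _ _ GG_cont]) (use assms L_pos GG_0 in \<open>auto simp: mult_le_cancel_left1\<close>)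
  then obtain y where y: "y \<in> {0..1}" "GG p q y = GG p q 1 * t" by auto
  have u: "z = y" if "z \<in> {0..1} \<and> GG p q z = GG p q 1 * t" for z
  proof (rule ccontr)
    assume "z \<noteq> y"
    then have "z < y \<or> y < z" by auto
    then show False using GG_strict[of z y] GG_strict[of y z] that y by auto
  qed
  show ?thesis unfolding mm_def
    by (rule theI[of _ y]) (use y u in auto)
qed

lemma mm_GG: assumes "0 \<le> y" "y \<le> 1" shows "mm p q (GG p q y / GG p q 1) = y"
proof -
  let ?t = "GG p q y / GG p q 1"
  have t: "0 \<le> ?t" "?t \<le> 1" using GG_mono[of 0 y] GG_mono[of y 1] assms L_pos GG_0 by auto
  have e: "GG p q (mm p q ?t) = GG p q y" using mm_ex[OF t] L_pos by simp
  have m: "mm p q ?t \<in> {0..1}" using mm_ex[OF t] by simp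
  show ?thesis
  proof (rule ccontr)
    assume "mm p q ?t \<noteq> y"
    then have "mm p q ?t < y \<or> y < mm p q ?t" by auto
    then show False using GG_strict[of "mm p q ?t" y] GG_strict[of y "mm p q ?t"] e m assms by auto
  qed
qed

lemma mm_0: "mm p q 0 = 0" using mm_GG[of 0] GG_0 by simp
lemma mm_1: "mm p q 1 = 1" using mm_GG[of 1] L_pos by simp

lemma mm_cont: "continuous_on {0..1} (mm p q)"
proof -
  have c: "continuous_on {0..1} (\<lambda>y. GG p q y / GG p q 1)"
    by (intro continuous_intros GG_cont) (use L_pos in auto)
  have "continuous_on ((\<lambda>y. GG p q y / GG p q 1) ` {0..1}) (mm p q)"
    by (rule continuous_on_inv[OF c]) (auto simp: mm_GG)
  moreover have "(\<lambda>y. GG p q y / GG p q 1) ` {0..1} = {0..1}"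
  proof
    show "(\<lambda>y. GG p q y / GG p q 1) ` {0..1} \<subseteq> {0..1}"
    proof
      fix z assume "z \<in> (\<lambda>y. GG p q y / GG p q 1) ` {0..1}"
      then obtain y where y: "y \<in> {0..1}" "z = GG p q y / GG p q 1" by auto
      have "0 \<le> GG p q y" "GG p q y \<le> GG p q 1" using GG_mono[of 0 y] GG_mono[of y 1] GG_0 y by auto
      then show "z \<in> {0..1}" using y L_pos by (auto simp: divide_le_eq_1)
    qed
    show "{0..1} \<subseteq> (\<lambda>y. GG p q y / GG p q 1) ` {0..1}"
    proof
      fix t :: real assume "t \<in> {0..1}"
      then have "mm p q t \<in> {0..1}" "GG p q (mm p q t) / GG p q 1 = t" using mm_ex[of t] L_pos by auto
      then show "t \<in> (\<lambda>y. GG p q y / GG p q 1) ` {0..1}" by force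
    qed
  qed
  ultimately show ?thesis by simp
qed

lemma mm_inner: assumes "0 < t" "t < 1" shows "0 < mm p q t" "mm p q t < 1"
proof -
  have m: "mm p q t \<in> {0..1}" "GG p q (mm p q t) = GG p q 1 * t" using mm_ex[of t] assms by auto
  show "0 < mm p q t"
  proof (rule ccontr)
    assume "\<not> 0 < mm p q t" then have "mm p q t = 0" using m by auto
    then show False using m GG_0 L_pos assms by auto
  qed
  show "mm p q t < 1"
  proof (rule ccontr)
    assume "\<not> mm p q t < 1" then have "mm p q t = 1" using m by auto
    then show False using m L_pos assms by auto
  qed
qed

lemma mm_deriv: assumes "0 < t" "t < 1"
  shows "DERIV (mm p q) t :> GG p q 1 * sqrt (hh p q (mm p q t))"
proof -
  let ?L = "GG p q 1"
  note mi = mm_inner[OF assms]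
  have hp: "hh p q (mm p q t) > 0" using hh_pos[OF pq mi] .
  have d: "DERIV (\<lambda>y. GG p q y / ?L) (mm p q t) :> gg p q (mm p q t) / ?L"
    using GG_deriv[OF mi] L_pos by (auto intro!: derivative_eq_intros)
  have "DERIV (mm p q) t :> inverse (gg p q (mm p q t) / ?L)"
  proof (rule DERIV_inverse_function[where f="\<lambda>y. GG p q y / ?L" and g="mm p q" and a=0 and b=1, OF d _ assms])
    show "gg p q (mm p q t) / ?L \<noteq> 0" using hp L_pos by (simp add: gg_def)
    show "GG p q (mm p q y) / ?L = y" if "0 < y" "y < 1" for y
      using mm_ex[of y] that L_pos by auto
    show "isCont (mm p q) t"
      using continuous_on_interior[OF mm_cont, of t] assms by simp
  qed
  then show ?thesis using hp L_pos by (simp add: gg_def mult.commute)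
qed

lemma mm_deriv_cont: "continuous_on {0<..<1} (\<lambda>t. GG p q 1 * sqrt (hh p q (mm p q t)))"
proof -
  have "isCont (\<lambda>t. GG p q 1 * sqrt (hh p q (mm p q t))) t" if "0 < t" "t < 1" for t
  proof -
    have c1: "isCont (mm p q) t" using continuous_on_interior[OF mm_cont, of t] that by simp
    have c2: "isCont (hh p q) (mm p q t)" using hh_cont[OF pq mm_inner[OF that]] .
    have "isCont (\<lambda>t. hh p q (mm p q t)) t" using continuous_at_compose[OF c1 c2] by (simp add: o_def)
    then show ?thesis by (intro continuous_intros)
  qed
  then show ?thesis by (intro continuous_at_imp_continuous_on) auto
qed

end


lemma antisym_dsum:
  fixes f :: "nat \<Rightarrow> nat \<Rightarrow> real"
  assumes "\<And>j k. j \<in> A \<Longrightarrow> k \<in> A \<Longrightarrow> f k j = - f j k"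
  shows "(\<Sum>j\<in>A. \<Sum>k\<in>A. f j k) = 0"
proof -
  have "(\<Sum>j\<in>A. \<Sum>k\<in>A. f j k) = (\<Sum>k\<in>A. \<Sum>j\<in>A. f j k)" by (rule sum.swap)
  also have "\<dots> = (\<Sum>k\<in>A. \<Sum>j\<in>A. - f k j)"
  proof (intro sum.cong refl)
    fix k j assume "k \<in> A" "j \<in> A"
    from assms[OF this] show "f j k = - f k j" by simp
  qed
  also have "\<dots> = - (\<Sum>j\<in>A. \<Sum>k\<in>A. f j k)" by (simp add: sum_negf)
  finally show ?thesis by simp
qed

lemma edge_pos:
  assumes tri: "tridiagonal n K" and irr: "irreducible_mat n K" and rs: "row_stochastic n K"
    and rev: "reversible_wrt n K \<pi>" and i: "i + 1 < n"
  shows "K i (i+1) > 0" "K (i+1) i > 0"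
proof -
  have nn: "K i (i+1) \<ge> 0" using rs i unfolding row_stochastic_def by auto
  have db: "\<pi> i * K i (i+1) = \<pi> (i+1) * K (i+1) i" and pp: "\<pi> i > 0" "\<pi> (i+1) > 0"
    using rev i unfolding reversible_wrt_def by auto
  let ?E = "{(a, b). a < n \<and> b < n \<and> K a b > 0}"
  show q: "K i (i+1) > 0"
  proof (rule ccontr)
    assume "\<not> K i (i+1) > 0"
    then have z: "K i (i+1) = 0" using nn by auto
    have "b \<le> i" if "(a, b) \<in> ?E\<^sup>*" "a \<le> i" for a b
      using that(1,2)
    proof (induction rule: rtrancl_induct)
      case base then show ?case by simp
    next
      case (step b c)
      then have bc: "b < n" "c < n" "K b c > 0" "b \<le> i" by auto
      show ?case
      proof (rule ccontr)
        assume "\<not> c \<le> i"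
        then have "c \<ge> i + 1" by auto
        show False
        proof (cases "b + 1 < c")
          case True
          have "K b c = 0" using tri bc True unfolding tridiagonal_def by blast
          then show False using bc by simp
        next
          case False
          then have "b = i" "c = i + 1" using bc \<open>c \<ge> i+1\<close> by auto
          then show False using bc z by simp
        qed
      qed
    qed
    moreover have "(i, i+1) \<in> ?E\<^sup>*" using irr i unfolding irreducible_mat_def by auto
    ultimately have "i + 1 \<le> i" by blast
    then show False by simp
  qed
  show "K (i+1) i > 0"
  proof -
    have "\<pi> (i+1) * K (i+1) i > 0" using db pp q by (metis mult_pos_pos)
    then show ?thesis using pp by (simp add: zero_less_mult_iff)
  qed
qed

lemma flux_identity:
  assumes tri: "tridiagonal n K" and db: "\<And>j k. j < n \<Longrightarrow> k < n \<Longrightarrow> \<pi> j * K j k = \<pi> k * K k j"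
    and i: "i + 1 < n"
  shows "(\<Sum>j\<in>{i+1..<n}. \<pi> j * (- (\<Sum>k<n. (\<psi> k - \<psi> j) * K j k * log_mean (Q j) (Q k))))
         = \<pi> i * K i (i+1) * (\<psi> (i+1) - \<psi> i) * log_mean (Q i) (Q (i+1))"
proof -
  define f where "f j k = \<pi> j * ((\<psi> k - \<psi> j) * K j k * log_mean (Q j) (Q k))" for j k
  have split: "{..<n} = {..<i+1} \<union> {i+1..<n}" using i by auto
  have A: "(\<Sum>j\<in>{i+1..<n}. \<Sum>k\<in>{i+1..<n}. f j k) = 0"
  proof (rule antisym_dsum)
    fix j k assume "j \<in> {i+1..<n}" "k \<in> {i+1..<n}"
    then have e: "\<pi> j * K j k = \<pi> k * K k j" using db by auto
    have l: "log_mean (Q k) (Q j) = log_mean (Q j) (Q k)" by (rule lm_sym)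
    have "f k j = (\<pi> k * K k j) * (\<psi> j - \<psi> k) * log_mean (Q k) (Q j)"
      unfolding f_def by (simp only: mult_ac)
    also have "\<dots> = - ((\<pi> j * K j k) * (\<psi> k - \<psi> j) * log_mean (Q j) (Q k))"
      unfolding e l by (simp add: algebra_simps)
    also have "\<dots> = - f j k" unfolding f_def by (simp only: mult_ac)
    finally show "f k j = - f j k" .
  qed
  have B: "(\<Sum>k\<in>{..<i+1}. f j k) = (if j = i + 1 then f (i+1) i else 0)" if "j \<in> {i+1..<n}" for j
  proof -
    have z: "f j k = 0" if "k < i + 1" "\<not> (j = i + 1 \<and> k = i)" for k
    proof -
      have "j + 0 > k + 1" using that \<open>j \<in> {i+1..<n}\<close> by auto
      then have "K j k = 0" using tri \<open>j \<in> {i+1..<n}\<close> i that unfolding tridiagonal_def by auto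
      then show ?thesis by (simp add: f_def)
    qed
    show ?thesis
    proof (cases "j = i + 1")
      case True
      have "(\<Sum>k\<in>{..<i+1}. f j k) = f j i"
        by (subst sum.mono_neutral_right[of "{..<i+1}" "{i}"]) (use z True in auto)
      then show ?thesis using True by simp
    next
      case False
      then show ?thesis using z by (auto intro!: sum.neutral)
    qed
  qed
  have "(\<Sum>j\<in>{i+1..<n}. \<Sum>k<n. f j k) =
        (\<Sum>j\<in>{i+1..<n}. \<Sum>k\<in>{i+1..<n}. f j k) + (\<Sum>j\<in>{i+1..<n}. \<Sum>k\<in>{..<i+1}. f j k)"
    by (subst split, subst sum.union_disjoint) (auto simp: sum.distrib)
  also have "\<dots> = (\<Sum>j\<in>{i+1..<n}. if j = i + 1 then f (i+1) i else 0)"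
    using A B by simp
  also have "\<dots> = f (i+1) i" using i by simp
  finally have S: "(\<Sum>j\<in>{i+1..<n}. \<Sum>k<n. f j k) = f (i+1) i" .
  have "(\<Sum>j\<in>{i+1..<n}. \<pi> j * (- (\<Sum>k<n. (\<psi> k - \<psi> j) * K j k * log_mean (Q j) (Q k))))
        = - (\<Sum>j\<in>{i+1..<n}. \<Sum>k<n. f j k)"
    by (simp add: f_def sum_distrib_left sum_negf)
  also have "\<dots> = - f (i+1) i" using S by simp
  also have "\<dots> = \<pi> i * K i (i+1) * (\<psi> (i+1) - \<psi> i) * log_mean (Q i) (Q (i+1))"
  proof -
    have e: "\<pi> (i+1) * K (i+1) i = \<pi> i * K i (i+1)" using db[of i "i+1"] i by simp
    have l: "log_mean (Q (i+1)) (Q i) = log_mean (Q i) (Q (i+1))" by (rule lm_sym)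
    have "- f (i+1) i = (\<pi> (i+1) * K (i+1) i) * (\<psi> (i+1) - \<psi> i) * log_mean (Q (i+1)) (Q i)"
      unfolding f_def by (simp add: algebra_simps)
    then show ?thesis unfolding e l by simp
  qed
  finally show ?thesis .
qed

lemma act_lb:
  fixes T :: "nat \<Rightarrow> nat \<Rightarrow> real"
  assumes "\<And>j k. j < n \<Longrightarrow> k < n \<Longrightarrow> T j k \<ge> 0" "i + 1 < n"
  shows "(\<Sum>j<n. \<Sum>k<n. T j k) \<ge> T i (i+1) + T (i+1) i"
proof -
  have "(\<Sum>j<n. \<Sum>k<n. T j k) \<ge> (\<Sum>j\<in>{i, i+1}. \<Sum>k<n. T j k)"
    by (rule sum_mono2) (use assms in \<open>auto intro!: sum_nonneg\<close>)
  moreover have "(\<Sum>k<n. T i k) \<ge> T i (i+1)"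
    by (rule member_le_sum) (use assms in auto)
  moreover have "(\<Sum>k<n. T (i+1) k) \<ge> T (i+1) i"
    by (rule member_le_sum) (use assms in auto)
  ultimately show ?thesis by simp
qed


lemma has_integral_le_negl:
  fixes f g :: "real \<Rightarrow> real"
  assumes f: "(f has_integral I) S" and g: "(g has_integral J) S" and N: "negligible N"
    and le: "\<And>x. x \<in> S - N \<Longrightarrow> f x \<le> g x"
  shows "I \<le> J"
proof -
  define g' where "g' x = (if x \<in> N then f x else g x)" for x
  have g': "(g' has_integral J) S"
    by (rule has_integral_spike[OF N _ g]) (simp add: g'_def)
  show ?thesis
    by (rule has_integral_le[OF f g']) (use le in \<open>auto simp: g'_def\<close>)
qed

lemma LB_delta:
  fixes F Fd a :: "real \<Rightarrow> real"
  assumes pq: "p > 0" "q > 0"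
    and Fc: "continuous_on {0..1} F" and F01: "F 0 = 0" "F 1 = 1"
    and Frange: "\<And>x. x \<in> {0..1} \<Longrightarrow> 0 \<le> F x \<and> F x \<le> 1"
    and S: "finite S" and Fd: "\<And>x. x \<in> {0<..<1} - S \<Longrightarrow> (F has_real_derivative Fd x) (at x)"
    and a: "(a has_integral A) {0..1}" and anon: "\<And>x. x \<in> {0..1} \<Longrightarrow> a x \<ge> 0"
    and N: "negligible N"
    and key: "\<And>x. x \<in> {0<..<1} - S - N \<Longrightarrow> 0 < F x \<Longrightarrow> F x < 1 \<Longrightarrow> (Fd x)\<^sup>2 \<le> a x * hh p q (F x)"
    and d: "0 < d" "d < 1/2"
  shows "(GG p q (1 - d) - GG p q d)\<^sup>2 \<le> A"
proof -
  let ?G = "GG p q"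
  define \<Lambda> where "\<Lambda> = ?G (1 - d) - ?G d"
  have \<Lambda>0: "\<Lambda> \<ge> 0" unfolding \<Lambda>_def using GG_mono[OF pq, of d "1-d"] d by auto
  define T where "T = {0..1} \<inter> F -` {1-d..}"
  have Tc: "closed T" unfolding T_def by (rule continuous_closed_preimage[OF Fc]) auto
  have T1: "1 \<in> T" unfolding T_def using F01 d by auto
  have Tb: "bdd_below T" unfolding T_def by (rule bdd_belowI[of _ 0]) auto
  define t where "t = Inf T"
  have tT: "t \<in> T" unfolding t_def by (rule closed_contains_Inf[OF _ Tb Tc]) (use T1 in auto)
  have t01: "0 \<le> t" "t \<le> 1" and Ft: "F t \<ge> 1 - d" using tT unfolding T_def by auto
  have below_t: "F x < 1 - d" if "0 \<le> x" "x < t" for x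
  proof (rule ccontr)
    assume "\<not> F x < 1 - d"
    then have "x \<in> T" unfolding T_def using that t01 by auto
    then have "t \<le> x" unfolding t_def by (rule cInf_lower[OF _ Tb])
    then show False using that by simp
  qed
  define U where "U = {0..t} \<inter> F -` {..d}"
  have Uc: "closed U" unfolding U_def
    by (rule continuous_closed_preimage[OF continuous_on_subset[OF Fc]]) (use t01 in auto)
  have U0: "0 \<in> U" unfolding U_def using F01 d t01 by auto
  have Ub: "bdd_above U" unfolding U_def by (rule bdd_aboveI[of _ t]) auto
  define s where "s = Sup U"
  have sU: "s \<in> U" unfolding s_def by (rule closed_contains_Sup[OF _ Ub Uc]) (use U0 in auto)
  have s0: "0 \<le> s" "s \<le> t" and Fs: "F s \<le> d" using sU unfolding U_def by auto
  have above_s: "F x > d" if "s < x" "x \<le> t" for x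
  proof (rule ccontr)
    assume "\<not> F x > d"
    then have "x \<in> U" unfolding U_def using that s0 by auto
    then have "x \<le> s" unfolding s_def by (rule cSup_upper[OF _ Ub])
    then show False using that by simp
  qed
  have st: "s < t"
  proof (rule ccontr)
    assume "\<not> s < t" then have "s = t" using s0 by simp
    then show False using Fs Ft d by simp
  qed
  have inner: "d < F x \<and> F x < 1 - d" if "s < x" "x < t" for x
    using above_s[of x] below_t[of x] that s0 by auto
  define u where "u x = gg p q (F x) * Fd x" for x
  have ftc: "(u has_integral (?G (F t) - ?G (F s))) {s..t}"
  proof (rule fundamental_theorem_of_calculus_interior_strong[OF S])
    show "s \<le> t" using st by simp
    show "continuous_on {s..t} (\<lambda>x. ?G (F x))"
      by (rule continuous_on_compose2[OF GG_cont[OF pq] continuous_on_subset[OF Fc]])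
         (use s0 t01 Frange in auto)
    fix x assume x: "x \<in> {s<..<t} - S"
    then have x01: "x \<in> {0<..<1} - S" using s0 t01 by auto
    have Fx: "0 < F x" "F x < 1" using inner[of x] x d by auto
    have "DERIV (\<lambda>x. ?G (F x)) x :> gg p q (F x) * Fd x"
      by (rule DERIV_chain2[OF GG_deriv[OF pq Fx] Fd[OF x01]])
    then show "((\<lambda>x. ?G (F x)) has_vector_derivative u x) (at x)"
      by (simp add: u_def has_real_derivative_iff_has_vector_derivative)
  qed
  have J: "?G (F t) - ?G (F s) \<ge> \<Lambda>"
  proof -
    have "?G (F t) \<ge> ?G (1 - d)" using GG_mono[OF pq, of "1-d" "F t"] Ft Frange[of t] t01 d by auto
    moreover have "?G (F s) \<le> ?G d" using GG_mono[OF pq, of "F s" d] Fs Frange[of s] s0 t01 d by auto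
    ultimately show ?thesis unfolding \<Lambda>_def by simp
  qed
  have aint: "a integrable_on {s..t}"
    by (rule integrable_on_subinterval[OF has_integral_integrable[OF a]]) (use s0 t01 in auto)
  have ale: "integral {s..t} a \<le> A"
  proof -
    have "integral {s..t} a \<le> integral {0..1} a"
      by (rule integral_subset_le[OF _ aint has_integral_integrable[OF a]]) (use s0 t01 anon in auto)
    then show ?thesis using integral_unique[OF a] by simp
  qed
  have lin: "((\<lambda>x. 2 * \<Lambda> * u x - \<Lambda>\<^sup>2) has_integral
      (2 * \<Lambda> * (?G (F t) - ?G (F s)) - \<Lambda>\<^sup>2 * (t - s))) {s..t}"
  proof -
    have "((\<lambda>x. 2 * \<Lambda> * u x) has_integral 2 * \<Lambda> * (?G (F t) - ?G (F s))) {s..t}"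
      by (rule has_integral_mult_right[OF ftc])
    moreover have "((\<lambda>x. \<Lambda>\<^sup>2) has_integral \<Lambda>\<^sup>2 * (t - s)) {s..t}"
      using has_integral_const_real[of "\<Lambda>\<^sup>2" s t] st by (simp add: mult.commute)
    ultimately show ?thesis by (rule has_integral_diff)
  qed
  have cmp: "2 * \<Lambda> * (?G (F t) - ?G (F s)) - \<Lambda>\<^sup>2 * (t - s) \<le> integral {s..t} a"
  proof (rule has_integral_le_negl[OF lin integrable_integral[OF aint], of "N \<union> S \<union> {s, t}"])
    show "negligible (N \<union> S \<union> {s, t})" using N S by (simp add: negligible_finite)
    fix x assume x: "x \<in> {s..t} - (N \<union> S \<union> {s, t})"
    then have xi: "s < x" "x < t" by auto
    then have Fx: "0 < F x" "F x < 1" using inner[of x] d by auto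
    have xin: "x \<in> {0<..<1} - S - N" using x xi s0 t01 by auto
    have h: "hh p q (F x) > 0" using hh_pos[OF pq Fx] .
    have k: "(Fd x)\<^sup>2 \<le> a x * hh p q (F x)" using key[OF xin Fx] .
    have "(u x)\<^sup>2 = (Fd x)\<^sup>2 / hh p q (F x)"
      using h by (simp add: u_def gg_def power_mult_distrib power_divide)
    also have "\<dots> \<le> a x" using k h by (simp add: divide_le_eq)
    finally have "(u x)\<^sup>2 \<le> a x" .
    moreover have "2 * \<Lambda> * u x - \<Lambda>\<^sup>2 \<le> (u x)\<^sup>2"
      using sum_power2_ge_zero[of "u x - \<Lambda>" 0] by (simp add: power2_diff algebra_simps)
    ultimately show "2 * \<Lambda> * u x - \<Lambda>\<^sup>2 \<le> a x" by simp
  qed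
  have "\<Lambda>\<^sup>2 \<le> 2 * \<Lambda> * (?G (F t) - ?G (F s)) - \<Lambda>\<^sup>2 * (t - s)"
  proof -
    have "2 * \<Lambda> * \<Lambda> \<le> 2 * \<Lambda> * (?G (F t) - ?G (F s))" using J \<Lambda>0 by (intro mult_left_mono) auto
    moreover have "\<Lambda>\<^sup>2 * (t - s) \<le> \<Lambda>\<^sup>2 * 1" using s0 t01 by (intro mult_left_mono) auto
    ultimately show ?thesis by (simp add: power2_eq_square)
  qed
  then show ?thesis using cmp ale unfolding \<Lambda>_def by linarith
qed

lemma LB_limit:
  fixes F Fd a :: "real \<Rightarrow> real"
  assumes pq: "p > 0" "q > 0"
    and Fc: "continuous_on {0..1} F" and F01: "F 0 = 0" "F 1 = 1"
    and Frange: "\<And>x. x \<in> {0..1} \<Longrightarrow> 0 \<le> F x \<and> F x \<le> 1"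
    and S: "finite S" and Fd: "\<And>x. x \<in> {0<..<1} - S \<Longrightarrow> (F has_real_derivative Fd x) (at x)"
    and a: "(a has_integral A) {0..1}" and anon: "\<And>x. x \<in> {0..1} \<Longrightarrow> a x \<ge> 0"
    and N: "negligible N"
    and key: "\<And>x. x \<in> {0<..<1} - S - N \<Longrightarrow> 0 < F x \<Longrightarrow> F x < 1 \<Longrightarrow> (Fd x)\<^sup>2 \<le> a x * hh p q (F x)"
  shows "(GG p q 1)\<^sup>2 \<le> A"
proof -
  let ?f = "\<lambda>d. (GG p q (1 - d) - GG p q d)\<^sup>2"
  have c1: "continuous_on {0..1/2} (\<lambda>d. GG p q (1 - d))"
    by (rule continuous_on_compose2[OF GG_cont[OF pq]]) (auto intro!: continuous_intros)
  have c2: "continuous_on {0..1/2} (GG p q)"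
    by (rule continuous_on_subset[OF GG_cont[OF pq]]) auto
  have "continuous_on {0..1/2} ?f" by (intro continuous_intros c1 c2)
  then have "(?f \<longlongrightarrow> ?f 0) (at_right 0)"
    by (rule continuous_on_Icc_at_rightD) simp
  then have lim: "(?f \<longlongrightarrow> (GG p q 1)\<^sup>2) (at_right 0)" by (simp add: GG_0[OF pq])
  have ev: "eventually (\<lambda>d. ?f d \<le> A) (at_right (0::real))"
    unfolding eventually_at_right_field
    by (rule exI[of _ "1/2"]) (auto intro!: LB_delta[OF assms])
  show ?thesis by (rule tendsto_upperbound[OF lim ev]) simp
qed


lemma key_pointwise:
  fixes Qv \<psi>v :: "nat \<Rightarrow> real"
  assumes tri: "tridiagonal n K" and rs: "row_stochastic n K" and rev: "reversible_wrt n K \<pi>"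
    and i: "i + 1 < n" and qpos: "K i (i+1) > 0" "K (i+1) i > 0"
    and Qnn: "\<And>j. j < n \<Longrightarrow> Qv j \<ge> 0"
    and bi: "\<pi> i * Qv i \<le> 1 - F" and bi1: "\<pi> (i+1) * Qv (i+1) \<le> F"
  shows "(\<Sum>j\<in>{i+1..<n}. \<pi> j * (- (\<Sum>k<n. (\<psi>v k - \<psi>v j) * K j k * log_mean (Qv j) (Qv k))))\<^sup>2
         \<le> ((1/2) * (\<Sum>j<n. \<Sum>k<n. (\<psi>v j - \<psi>v k)\<^sup>2 * K j k * log_mean (Qv j) (Qv k) * \<pi> j))
           * hh (K (i+1) i) (K i (i+1)) F"
proof -
  let ?p = "K (i+1) i" and ?q = "K i (i+1)"
  have db: "\<And>j k. j < n \<Longrightarrow> k < n \<Longrightarrow> \<pi> j * K j k = \<pi> k * K k j"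
    and ppos: "\<And>j. j < n \<Longrightarrow> \<pi> j > 0" using rev unfolding reversible_wrt_def by auto
  have Knn: "\<And>j k. j < n \<Longrightarrow> k < n \<Longrightarrow> K j k \<ge> 0" using rs unfolding row_stochastic_def by auto
  define c where "c = \<pi> i * ?q"
  define \<phi> where "\<phi> = \<psi>v (i+1) - \<psi>v i"
  define B where "B = log_mean (Qv i) (Qv (i+1))"
  have c0: "c > 0" unfolding c_def using ppos[of i] i qpos by simp
  have B0: "B \<ge> 0" unfolding B_def using Qnn i by (intro lm_nonneg) auto
  have flux: "(\<Sum>j\<in>{i+1..<n}. \<pi> j * (- (\<Sum>k<n. (\<psi>v k - \<psi>v j) * K j k * log_mean (Qv j) (Qv k))))
      = c * \<phi> * B"
    unfolding c_def \<phi>_def B_def by (rule flux_identity[OF tri db i])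
  define T where "T j k = (\<psi>v j - \<psi>v k)\<^sup>2 * K j k * log_mean (Qv j) (Qv k) * \<pi> j" for j k
  have Tnn: "T j k \<ge> 0" if "j < n" "k < n" for j k
    unfolding T_def using Knn[OF that] ppos[OF that(1)] lm_nonneg[OF Qnn[OF that(1)] Qnn[OF that(2)]]
    by simp
  have "(\<Sum>j<n. \<Sum>k<n. T j k) \<ge> T i (i+1) + T (i+1) i" by (rule act_lb[OF Tnn i])
  moreover have "T i (i+1) + T (i+1) i = 2 * (c * \<phi>\<^sup>2 * B)"
  proof -
    have e: "\<pi> (i+1) * ?p = \<pi> i * ?q" using db[of "i+1" i] i by simp
    have l: "log_mean (Qv (i+1)) (Qv i) = B" unfolding B_def by (rule lm_sym)
    have "T (i+1) i = \<phi>\<^sup>2 * (\<pi> (i+1) * ?p) * B" unfolding T_def \<phi>_def l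
      by (simp add: power2_commute algebra_simps)
    also have "\<dots> = c * \<phi>\<^sup>2 * B" unfolding e c_def by simp
    finally have "T (i+1) i = c * \<phi>\<^sup>2 * B" .
    moreover have "T i (i+1) = c * \<phi>\<^sup>2 * B" unfolding T_def c_def \<phi>_def B_def
      by (simp add: power2_commute algebra_simps)
    ultimately show ?thesis by simp
  qed
  ultimately have act: "(1/2) * (\<Sum>j<n. \<Sum>k<n. T j k) \<ge> c * \<phi>\<^sup>2 * B" by simp
  have hb: "c * B \<le> hh ?p ?q F"
  proof -
    have "c * B = log_mean (c * Qv i) (c * Qv (i+1))" unfolding B_def by (simp add: lm_hom[OF c0])
    also have "\<dots> = log_mean (c * Qv (i+1)) (c * Qv i)" by (rule lm_sym)
    also have "\<dots> \<le> log_mean (?p * F) (?q * (1 - F))"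
    proof (rule lm_mono)
      show "0 \<le> c * Qv (i+1)" "0 \<le> c * Qv i" using c0 Qnn i by auto
      have "c * Qv (i+1) = ?p * (\<pi> (i+1) * Qv (i+1))"
        using db[of "i+1" i] i unfolding c_def by (simp add: algebra_simps)
      also have "\<dots> \<le> ?p * F" using bi1 qpos by (intro mult_left_mono) auto
      finally show "c * Qv (i+1) \<le> ?p * F" .
      have "c * Qv i = ?q * (\<pi> i * Qv i)" unfolding c_def by (simp add: algebra_simps)
      also have "\<dots> \<le> ?q * (1 - F)" using bi qpos by (intro mult_left_mono) auto
      finally show "c * Qv i \<le> ?q * (1 - F)" .
    qed
    finally show ?thesis unfolding hh_def .
  qed
  have "(c * \<phi> * B)\<^sup>2 = (c * \<phi>\<^sup>2 * B) * (c * B)" by (simp add: power2_eq_square algebra_simps)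
  also have "\<dots> \<le> ((1/2) * (\<Sum>j<n. \<Sum>k<n. T j k)) * hh ?p ?q F"
    by (rule mult_mono[OF act hb]) (use c0 B0 Tnn in \<open>auto intro!: sum_nonneg\<close>)
  finally show ?thesis unfolding flux T_def .
qed

lemma lower_bound:
  assumes tri: "tridiagonal n K" and irr: "irreducible_mat n K" and rs: "row_stochastic n K"
    and rev: "reversible_wrt n K \<pi>" and i: "i + 1 < n"
    and adm: "admissible_path n K \<pi> (\<lambda>j. unit_vec i j / \<pi> j) (\<lambda>j. unit_vec (i+1) j / \<pi> j) Q \<psi>"
  shows "ennreal ((GG (K (i+1) i) (K i (i+1)) 1)\<^sup>2) \<le> action n K \<pi> Q \<psi>"
proof -
  let ?p = "K (i+1) i" and ?q = "K i (i+1)"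
  have pq: "?p > 0" "?q > 0" using edge_pos[OF tri irr rs rev i] by auto
  have ppos: "\<And>j. j < n \<Longrightarrow> \<pi> j > 0" using rev unfolding reversible_wrt_def by auto
  have Knn: "\<And>j k. j < n \<Longrightarrow> k < n \<Longrightarrow> K j k \<ge> 0" using rs unfolding row_stochastic_def by auto
  have pc: "\<And>j. j < n \<Longrightarrow> (\<lambda>\<tau>. Q \<tau> j) piecewise_C1_differentiable_on {0..1}"
    and pd: "\<And>\<tau>. \<tau> \<in> {0..1} \<Longrightarrow> prob_density n \<pi> (Q \<tau>)"
    and \<psi>m: "\<And>j. j < n \<Longrightarrow> (\<lambda>\<tau>. \<psi> \<tau> j) \<in> borel_measurable lborel"
    and ae: "AE \<tau> in lborel. \<tau> \<in> {0..1} \<longrightarrow> (\<forall>j<n.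
        ((\<lambda>t. Q t j) has_real_derivative
          - (\<Sum>k<n. (\<psi> \<tau> k - \<psi> \<tau> j) * K j k * log_mean (Q \<tau> j) (Q \<tau> k))) (at \<tau>))"
    and ends: "\<And>j. j < n \<Longrightarrow> Q 0 j = unit_vec i j / \<pi> j \<and> Q 1 j = unit_vec (i+1) j / \<pi> j"
    using adm unfolding admissible_path_def by auto
  have Qc: "\<And>j. j < n \<Longrightarrow> continuous_on {0..1} (\<lambda>\<tau>. Q \<tau> j)"
    using pc unfolding piecewise_C1_differentiable_on_def by auto
  have Qnn: "\<And>\<tau> j. \<tau> \<in> {0..1} \<Longrightarrow> j < n \<Longrightarrow> Q \<tau> j \<ge> 0"
    using pd unfolding prob_density_def by auto
  have Qsum: "\<And>\<tau>. \<tau> \<in> {0..1} \<Longrightarrow> (\<Sum>j<n. Q \<tau> j * \<pi> j) = 1"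
    using pd unfolding prob_density_def by auto
  define R where "R = {i+1..<n}"
  define F where "F \<tau> = (\<Sum>j\<in>R. Q \<tau> j * \<pi> j)" for \<tau>
  have split: "{..<n} = {..<i+1} \<union> R" using i unfolding R_def by auto
  have Fbounds: "0 \<le> F \<tau> \<and> F \<tau> \<le> 1 \<and> \<pi> i * Q \<tau> i \<le> 1 - F \<tau> \<and> \<pi> (i+1) * Q \<tau> (i+1) \<le> F \<tau>"
    if t: "\<tau> \<in> {0..1}" for \<tau>
  proof -
    have nn: "\<And>j. j < n \<Longrightarrow> Q \<tau> j * \<pi> j \<ge> 0" using Qnn[OF t] ppos by (simp add: less_imp_le)
    have "(\<Sum>j<i+1. Q \<tau> j * \<pi> j) + F \<tau> = 1"
      using Qsum[OF t] unfolding F_def split by (subst (asm) sum.union_disjoint) (auto simp: R_def)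
    moreover have "(\<Sum>j<i+1. Q \<tau> j * \<pi> j) \<ge> Q \<tau> i * \<pi> i"
      by (rule member_le_sum) (use nn i in auto)
    moreover have "F \<tau> \<ge> Q \<tau> (i+1) * \<pi> (i+1)" unfolding F_def
      by (rule member_le_sum) (use nn i in \<open>auto simp: R_def\<close>)
    moreover have "Q \<tau> i * \<pi> i \<ge> 0" "Q \<tau> (i+1) * \<pi> (i+1) \<ge> 0" using nn i by auto
    ultimately show ?thesis by (simp add: mult.commute)
  qed
  have Fc: "continuous_on {0..1} F" unfolding F_def
    by (intro continuous_intros Qc) (auto simp: R_def)
  have F0: "F 0 = 0" unfolding F_def
    by (intro sum.neutral) (use ends in \<open>auto simp: R_def unit_vec_def\<close>)
  have F1: "F 1 = 1"
  proof -
    have pi1: "\<pi> (i+1) > 0" using ppos i by simp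
    have "F 1 = (\<Sum>j\<in>R. if j = i + 1 then 1 else 0)" unfolding F_def
      by (intro sum.cong refl) (use ends pi1 in \<open>auto simp: R_def unit_vec_def\<close>)
    also have "\<dots> = 1" using i by (simp add: R_def)
    finally show ?thesis .
  qed
  have "\<forall>j. \<exists>S D. j < n \<longrightarrow> finite S \<and> (\<forall>x\<in>{0..1} - S. ((\<lambda>\<tau>. Q \<tau> j) has_real_derivative D x) (at x))"
  proof
    fix j show "\<exists>S D. j < n \<longrightarrow> finite S \<and> (\<forall>x\<in>{0..1} - S. ((\<lambda>\<tau>. Q \<tau> j) has_real_derivative D x) (at x))"
    proof (cases "j < n")
      case True
      then obtain S where S: "finite S" "(\<lambda>\<tau>. Q \<tau> j) C1_differentiable_on {0..1} - S"
        using pc unfolding piecewise_C1_differentiable_on_def by blast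
      then obtain D where "\<forall>x\<in>{0..1} - S. ((\<lambda>\<tau>. Q \<tau> j) has_vector_derivative D x) (at x)"
        unfolding C1_differentiable_on_def by blast
      then show ?thesis using S(1) by (auto simp: has_real_derivative_iff_has_vector_derivative)
    qed auto
  qed
  then obtain SS where "\<forall>j. \<exists>D. j < n \<longrightarrow> finite (SS j) \<and> (\<forall>x\<in>{0..1} - SS j. ((\<lambda>\<tau>. Q \<tau> j) has_real_derivative D x) (at x))"
    by (rule choice[THEN exE]) 
  then obtain DD where DD: "\<forall>j. j < n \<longrightarrow> finite (SS j) \<and> (\<forall>x\<in>{0..1} - SS j. ((\<lambda>\<tau>. Q \<tau> j) has_real_derivative DD j x) (at x))"
    by (rule choice[THEN exE]) 
  define S where "S = (\<Union>j<n. SS j)"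
  have Sfin: "finite S" unfolding S_def using DD by auto
  define Fd where "Fd x = (\<Sum>j\<in>R. DD j x * \<pi> j)" for x
  have Fd: "(F has_real_derivative Fd x) (at x)" if x: "x \<in> {0<..<1} - S" for x
  proof -
    have "((\<lambda>\<tau>. \<Sum>j\<in>R. Q \<tau> j * \<pi> j) has_real_derivative (\<Sum>j\<in>R. DD j x * \<pi> j)) (at x)"
    proof (rule DERIV_sum)
      fix j assume "j \<in> R"
      then have j: "j < n" by (auto simp: R_def)
      have "x \<in> {0..1} - SS j" using x j unfolding S_def by auto
      then show "((\<lambda>\<tau>. Q \<tau> j * \<pi> j) has_real_derivative DD j x * \<pi> j) (at x)"
        using DD j by (intro DERIV_cmult_right) auto
    qed
    then show ?thesis unfolding F_def Fd_def .
  qed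
  have "AE \<tau> in lebesgue. \<tau> \<in> {0..1} \<longrightarrow> (\<forall>j<n.
        ((\<lambda>t. Q t j) has_real_derivative
          - (\<Sum>k<n. (\<psi> \<tau> k - \<psi> \<tau> j) * K j k * log_mean (Q \<tau> j) (Q \<tau> k))) (at \<tau>))"
    by (rule AE_completion[OF ae])
  then obtain N where N: "negligible N" and Nsub: "{\<tau>. \<not> (\<tau> \<in> {0..1} \<longrightarrow> (\<forall>j<n.
        ((\<lambda>t. Q t j) has_real_derivative
          - (\<Sum>k<n. (\<psi> \<tau> k - \<psi> \<tau> j) * K j k * log_mean (Q \<tau> j) (Q \<tau> k))) (at \<tau>)))} \<subseteq> N"
    unfolding eventually_ae_filter_negligible by blast
  define a where "a \<tau> = (1/2) * (\<Sum>j<n. \<Sum>k<n. (\<psi> \<tau> j - \<psi> \<tau> k)\<^sup>2 * K j k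
                  * log_mean (Q \<tau> j) (Q \<tau> k) * \<pi> j)" for \<tau>
  have key: "(Fd x)\<^sup>2 \<le> a x * hh ?p ?q (F x)" if x: "x \<in> {0<..<1} - S - N" for x
  proof -
    have x01: "x \<in> {0..1}" using x by auto
    have der: "\<forall>j<n. ((\<lambda>t. Q t j) has_real_derivative
          - (\<Sum>k<n. (\<psi> x k - \<psi> x j) * K j k * log_mean (Q x j) (Q x k))) (at x)"
    proof -
      have "x \<notin> N" "x \<in> {0..1}" using x by auto
      then show ?thesis using Nsub by blast
    qed
    have "DD j x = - (\<Sum>k<n. (\<psi> x k - \<psi> x j) * K j k * log_mean (Q x j) (Q x k))" if j: "j < n" for j
    proof -
      have "x \<in> {0..1} - SS j" using x j unfolding S_def by auto
      then have "((\<lambda>\<tau>. Q \<tau> j) has_real_derivative DD j x) (at x)" using DD j by auto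
      then show ?thesis using der j by (metis DERIV_unique)
    qed
    then have "Fd x = (\<Sum>j\<in>{i+1..<n}. \<pi> j * (- (\<Sum>k<n. (\<psi> x k - \<psi> x j) * K j k * log_mean (Q x j) (Q x k))))"
      unfolding Fd_def R_def by (intro sum.cong refl) (auto simp: mult.commute)
    then show ?thesis unfolding a_def
      using key_pointwise[OF tri rs rev i pq(2) pq(1), where Qv="Q x" and F="F x" and \<psi>v="\<psi> x"] Qnn[OF x01] Fbounds[OF x01]
      by simp
  qed
  define cl where "cl \<tau> = max 0 (min 1 \<tau>)" for \<tau> :: real
  have clr: "cl \<tau> \<in> {0..1}" for \<tau> unfolding cl_def by auto
  have clid: "\<tau> \<in> {0..1} \<Longrightarrow> cl \<tau> = \<tau>" for \<tau> unfolding cl_def by auto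
  have Qcm: "(\<lambda>\<tau>. Q (cl \<tau>) j) \<in> borel_measurable borel" if j: "j < n" for j
  proof (rule borel_measurable_continuous_onI)
    show "continuous_on UNIV (\<lambda>\<tau>. Q (cl \<tau>) j)"
      by (rule continuous_on_compose2[OF Qc[OF j]]) (auto simp: cl_def clr intro!: continuous_intros)
  qed
  define ac where "ac \<tau> = (1/2) * (\<Sum>j<n. \<Sum>k<n. (\<psi> \<tau> j - \<psi> \<tau> k)\<^sup>2 * K j k
                  * log_mean (Q (cl \<tau>) j) (Q (cl \<tau>) k) * \<pi> j)" for \<tau>
  have ac_a: "\<tau> \<in> {0..1} \<Longrightarrow> ac \<tau> = a \<tau>" for \<tau> unfolding ac_def a_def by (simp add: clid)
  have inner: "(\<lambda>\<tau>. (\<psi> \<tau> j - \<psi> \<tau> k)\<^sup>2 * K j k * log_mean (Q (cl \<tau>) j) (Q (cl \<tau>) k) * \<pi> j) \<in> borel_measurable borel"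
    if j: "j < n" and k: "k < n" for j k
  proof -
    have [measurable]: "(\<lambda>\<tau>. \<psi> \<tau> j) \<in> borel_measurable borel" "(\<lambda>\<tau>. \<psi> \<tau> k) \<in> borel_measurable borel"
      using \<psi>m j k by (auto simp: measurable_lborel1)
    have [measurable]: "(\<lambda>\<tau>. Q (cl \<tau>) j) \<in> borel_measurable borel" "(\<lambda>\<tau>. Q (cl \<tau>) k) \<in> borel_measurable borel"
      using Qcm j k by auto
    show ?thesis by measurable
  qed
  have sm: "(\<lambda>\<tau>. \<Sum>j<n. \<Sum>k<n. (\<psi> \<tau> j - \<psi> \<tau> k)\<^sup>2 * K j k * log_mean (Q (cl \<tau>) j) (Q (cl \<tau>) k) * \<pi> j) \<in> borel_measurable borel"
    by (rule borel_measurable_sum, rule borel_measurable_sum, rule inner) auto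
  have acm: "ac \<in> borel_measurable borel"
    unfolding ac_def by (rule borel_measurable_times[OF _ sm]) simp
  have a_nn: "a \<tau> \<ge> 0" if t: "\<tau> \<in> {0..1}" for \<tau>
    unfolding a_def using Qnn[OF t] Knn ppos
    by (intro mult_nonneg_nonneg sum_nonneg lm_nonneg) (auto simp: less_imp_le)
  define f where "f \<tau> = (if \<tau> \<in> {0..1} then ac \<tau> else 0)" for \<tau>
  have fm: "f \<in> borel_measurable borel" unfolding f_def using acm by measurable
  have fnn: "f \<tau> \<ge> 0" for \<tau> unfolding f_def using a_nn ac_a by auto
  have act_eq: "action n K \<pi> Q \<psi> = (\<integral>\<^sup>+ \<tau>. ennreal (f \<tau>) \<partial>lborel)"
    unfolding action_def
    by (intro nn_integral_cong) (auto simp: f_def ac_a a_def indicator_def)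
  show ?thesis
  proof (cases "action n K \<pi> Q \<psi>")
    case top then show ?thesis by simp
  next
    case (real A)
    have "(f has_integral A) UNIV"
      by (rule nn_integral_has_integral[OF fm fnn]) (use real act_eq in auto)
    then have "(ac has_integral A) {0..1}" unfolding f_def has_integral_restrict_UNIV .
    then have aA: "(a has_integral A) {0..1}"
      by (rule has_integral_eq[rotated]) (simp add: ac_a)
    have "(GG ?p ?q 1)\<^sup>2 \<le> A"
    proof (rule LB_limit[OF pq Fc F0 F1 _ Sfin _ aA a_nn N])
      show "\<And>x. x \<in> {0..1} \<Longrightarrow> 0 \<le> F x \<and> F x \<le> 1" using Fbounds by blast
      show "\<And>x. x \<in> {0<..<1} - S \<Longrightarrow> (F has_real_derivative Fd x) (at x)" by (rule Fd)
      show "\<And>x. x \<in> {0<..<1} - S - N \<Longrightarrow> 0 < F x \<Longrightarrow> F x < 1 \<Longrightarrow> (Fd x)\<^sup>2 \<le> a x * hh ?p ?q (F x)"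
        using key by blast
    qed
    then show ?thesis using real by (simp add: ennreal_leI)
  qed
qed


lemma sum_single:
  fixes f :: "nat \<Rightarrow> real"
  assumes "finite A" "a \<in> A" "\<And>k. k \<in> A \<Longrightarrow> k \<noteq> a \<Longrightarrow> f k = 0"
  shows "sum f A = f a"
  using sum.mono_neutral_right[of A "{a}" f] assms by auto

lemma sum_two:
  fixes f :: "nat \<Rightarrow> real"
  assumes "finite A" "a \<in> A" "b \<in> A" "a \<noteq> b" "\<And>k. k \<in> A \<Longrightarrow> k \<noteq> a \<Longrightarrow> k \<noteq> b \<Longrightarrow> f k = 0"
  shows "sum f A = f a + f b"
  using sum.mono_neutral_right[of A "{a, b}" f] assms by auto

lemma dsum_two:
  fixes T :: "nat \<Rightarrow> nat \<Rightarrow> real"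
  assumes "a < n" "b < n" "a \<noteq> b"
    and z: "\<And>j k. j < n \<Longrightarrow> k < n \<Longrightarrow> \<not> ((j = a \<and> k = b) \<or> (j = b \<and> k = a)) \<Longrightarrow> T j k = 0"
  shows "(\<Sum>j<n. \<Sum>k<n. T j k) = T a b + T b a"
proof -
  have "(\<Sum>j<n. \<Sum>k<n. T j k) = (\<Sum>j<n. if j = a then T a b else if j = b then T b a else 0)"
  proof (intro sum.cong refl)
    fix j assume j: "j \<in> {..<n}"
    show "(\<Sum>k<n. T j k) = (if j = a then T a b else if j = b then T b a else 0)"
    proof (cases "j = a")
      case True then show ?thesis using assms z j by (auto intro!: sum_single)
    next
      case False
      show ?thesis
      proof (cases "j = b")
        case True then show ?thesis using assms z j by (auto intro!: sum_single)
      next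
        case False
        then show ?thesis using \<open>j \<noteq> a\<close> z j by (auto intro!: sum.neutral)
      qed
    qed
  qed
  also have "\<dots> = T a b + T b a" using assms by (subst sum_two[of _ a b]) auto
  finally show ?thesis .
qed

lemma pC1_affine:
  fixes g g' :: "real \<Rightarrow> real"
  assumes gc: "continuous_on {0..1} g" and gd: "\<And>t. t \<in> {0<..<1} \<Longrightarrow> DERIV g t :> g' t"
    and g'c: "continuous_on {0<..<1} g'"
  shows "(\<lambda>t. \<alpha> * g t + \<beta>) piecewise_C1_differentiable_on {0..1}"
  unfolding piecewise_C1_differentiable_on_def
proof (intro conjI exI[of _ "{0,1}"])
  show "continuous_on {0..1} (\<lambda>t. \<alpha> * g t + \<beta>)" by (intro continuous_intros gc)
  show "finite {0::real, 1}" by simp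
  have e: "{0..1} - {0,1} = {0<..<1::real}" by auto
  show "(\<lambda>t. \<alpha> * g t + \<beta>) C1_differentiable_on {0..1} - {0, 1}"
    unfolding C1_differentiable_on_def e
  proof (intro exI[of _ "\<lambda>t. \<alpha> * g' t"] conjI ballI)
    fix t :: real assume "t \<in> {0<..<1}"
    then have "DERIV (\<lambda>t. \<alpha> * g t + \<beta>) t :> \<alpha> * g' t"
      using gd by (auto intro!: derivative_eq_intros)
    then show "((\<lambda>t. \<alpha> * g t + \<beta>) has_vector_derivative \<alpha> * g' t) (at t)"
      by (simp add: has_real_derivative_iff_has_vector_derivative)
  next
    show "continuous_on {0<..<1} (\<lambda>t. \<alpha> * g' t)" by (intro continuous_intros g'c)
  qed
qed

context fixes p q :: real assumes pq: "p > 0" "q > 0"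
begin

lemma hhm_cont: "continuous_on {0<..<1} (\<lambda>t. hh p q (mm p q t))"
proof -
  have "isCont (\<lambda>t. hh p q (mm p q t)) t" if "0 < t" "t < 1" for t
  proof -
    have c1: "isCont (mm p q) t" using continuous_on_interior[OF mm_cont[OF pq], of t] that by simp
    have c2: "isCont (hh p q) (mm p q t)" using hh_cont[OF pq mm_inner[OF pq that]] .
    show ?thesis using continuous_at_compose[OF c1 c2] by (simp add: o_def)
  qed
  then show ?thesis by (intro continuous_at_imp_continuous_on) auto
qed

lemma phi_meas: "(\<lambda>t. if t \<in> {0<..<1} then GG p q 1 / sqrt (hh p q (mm p q t)) else 0) \<in> borel_measurable borel"
proof (rule borel_measurable_continuous_on_if)
  show "continuous_on {0<..<1} (\<lambda>t. GG p q 1 / sqrt (hh p q (mm p q t)))"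
    using hhm_cont hh_pos[OF pq mm_inner[OF pq]]
    by (intro continuous_intros) (fastforce+)
qed auto

end


lemma upper_bound:
  assumes tri: "tridiagonal n K" and irr: "irreducible_mat n K" and rs: "row_stochastic n K"
    and rev: "reversible_wrt n K \<pi>" and i: "i + 1 < n"
  shows "\<exists>Q \<psi>. admissible_path n K \<pi> (\<lambda>j. unit_vec i j / \<pi> j) (\<lambda>j. unit_vec (i+1) j / \<pi> j) Q \<psi>
          \<and> action n K \<pi> Q \<psi> = ennreal ((GG (K (i+1) i) (K i (i+1)) 1)\<^sup>2)"
proof -
  let ?p = "K (i+1) i" and ?q = "K i (i+1)"
  have pq: "?p > 0" "?q > 0" using edge_pos[OF tri irr rs rev i] by auto
  have ppos: "\<And>j. j < n \<Longrightarrow> \<pi> j > 0" using rev unfolding reversible_wrt_def by auto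
  have db: "\<pi> (i+1) * ?p = \<pi> i * ?q" using rev i unfolding reversible_wrt_def by auto
  have pi0: "\<pi> i > 0" "\<pi> (i+1) > 0" using ppos i by auto
  define L where "L = GG ?p ?q 1"
  define m where "m = mm ?p ?q"
  define h where "h t = hh ?p ?q (m t)" for t
  define \<alpha> where "\<alpha> j = (if j = i then - 1 / \<pi> i else if j = i + 1 then 1 / \<pi> (i+1) else 0)" for j
  define \<beta> where "\<beta> j = (if j = i then 1 / \<pi> i else 0)" for j
  define Q where "Q t j = \<alpha> j * m t + \<beta> j" for t j
  define \<phi> where "\<phi> t = (if t \<in> {0<..<1} then L / sqrt (h t) else 0)" for t
  define \<psi> where "\<psi> t j = (if j = i + 1 then \<phi> t else 0)" for t j
  have Lpos: "L > 0" unfolding L_def by (rule L_pos[OF pq])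
  have m01: "t \<in> {0..1} \<Longrightarrow> 0 \<le> m t \<and> m t \<le> 1" for t
    using mm_ex[OF pq, of t] unfolding m_def by auto
  have mi: "0 < t \<Longrightarrow> t < 1 \<Longrightarrow> 0 < m t \<and> m t < 1" for t
    using mm_inner[OF pq, of t] unfolding m_def by auto
  have hpos: "0 < t \<Longrightarrow> t < 1 \<Longrightarrow> h t > 0" for t
    unfolding h_def m_def using hh_pos[OF pq] mm_inner[OF pq] by blast
  have md: "t \<in> {0<..<1} \<Longrightarrow> DERIV m t :> L * sqrt (h t)" for t
    unfolding m_def L_def h_def using mm_deriv[OF pq] by auto
  have Qi: "Q t i = (1 - m t) / \<pi> i" for t unfolding Q_def \<alpha>_def \<beta>_def using pi0 by (simp add: field_simps)
  have Qi1: "Q t (Suc i) = m t / \<pi> (Suc i)" for t unfolding Q_def \<alpha>_def \<beta>_def by simp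
  have Qo: "j \<noteq> i \<Longrightarrow> j \<noteq> i + 1 \<Longrightarrow> Q t j = 0" for t j unfolding Q_def \<alpha>_def \<beta>_def by simp
  have Qnn: "Q t j \<ge> 0" if "t \<in> {0..1}" for t j
  proof (cases "j = i")
    case True then show ?thesis using Qi[of t] m01[of t] pi0 that by simp
  next
    case False
    then show ?thesis
    proof (cases "j = i + 1")
      case True then show ?thesis using Qi1[of t] m01[of t] pi0 that by simp
    qed (simp add: Qo)
  qed
  have lmh: "\<pi> i * ?q * log_mean (Q t i) (Q t (i+1)) = h t" if t: "t \<in> {0..1}" for t
  proof -
    have c0: "\<pi> i * ?q > 0" using pi0 pq by simp
    have "\<pi> i * ?q * log_mean (Q t i) (Q t (i+1)) = log_mean (\<pi> i * ?q * Q t i) (\<pi> i * ?q * Q t (i+1))"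
      by (rule lm_hom[OF c0, symmetric])
    also have "\<pi> i * ?q * Q t i = ?q * (1 - m t)" using pi0 by (simp add: Qi)
    also have "\<pi> i * ?q * Q t (i+1) = ?p * m t" using pi0 db[symmetric] by (simp add: Qi1 field_simps)
    also have "log_mean (?q * (1 - m t)) (?p * m t) = h t" unfolding h_def hh_def by (rule lm_sym)
    finally show ?thesis .
  qed
  have lmh': "\<pi> (i+1) * ?p * log_mean (Q t (i+1)) (Q t i) = h t" if t: "t \<in> {0..1}" for t
  proof -
    have "log_mean (Q t (i+1)) (Q t i) = log_mean (Q t i) (Q t (i+1))" by (rule lm_sym)
    then show ?thesis using lmh[OF t] db by simp
  qed
  have adm: "admissible_path n K \<pi> (\<lambda>j. unit_vec i j / \<pi> j) (\<lambda>j. unit_vec (i+1) j / \<pi> j) Q \<psi>"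
    unfolding admissible_path_def
  proof (intro conjI allI impI ballI)
    fix j assume "j < n"
    show "(\<lambda>\<tau>. Q \<tau> j) piecewise_C1_differentiable_on {0..1}"
      unfolding Q_def
      by (rule pC1_affine[OF mm_cont[OF pq, folded m_def] md])
         (use mm_deriv_cont[OF pq] in \<open>simp_all add: L_def h_def m_def\<close>)
  next
    fix \<tau> :: real assume t: "\<tau> \<in> {0..1}"
    show "prob_density n \<pi> (Q \<tau>)" unfolding prob_density_def
    proof (intro conjI allI impI)
      show "0 \<le> Q \<tau> j" if "j < n" for j using Qnn[OF t] .
      have "(\<Sum>j<n. Q \<tau> j * \<pi> j) = Q \<tau> i * \<pi> i + Q \<tau> (i+1) * \<pi> (i+1)"
        by (rule sum_two) (use i Qo in auto)
      also have "\<dots> = 1" using pi0 by (simp add: Qi Qi1)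
      finally show "(\<Sum>j<n. Q \<tau> j * \<pi> j) = 1" .
    qed
  next
    fix j assume "j < n"
    have "\<phi> \<in> borel_measurable borel" unfolding \<phi>_def h_def m_def L_def by (rule phi_meas[OF pq])
    then show "(\<lambda>\<tau>. \<psi> \<tau> j) \<in> borel_measurable lborel"
      unfolding \<psi>_def by (cases "j = i + 1") (auto simp: measurable_lborel1)
  next
    show "AE \<tau> in lborel. \<tau> \<in> {0..1} \<longrightarrow> (\<forall>j<n.
        ((\<lambda>t. Q t j) has_real_derivative
          - (\<Sum>k<n. (\<psi> \<tau> k - \<psi> \<tau> j) * K j k * log_mean (Q \<tau> j) (Q \<tau> k))) (at \<tau>))"
      using AE_lborel_singleton[of 0] AE_lborel_singleton[of 1]
    proof eventually_elim
      case (elim \<tau>)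
      show ?case
      proof (intro impI allI)
        fix j assume t: "\<tau> \<in> {0..1}" and j: "j < n"
        then have t': "\<tau> \<in> {0<..<1}" using elim by auto
        then have t'': "0 < \<tau>" "\<tau> < 1" by auto
        have hp: "h \<tau> > 0" using hpos[OF t''] .
        have ph: "\<phi> \<tau> = L / sqrt (h \<tau>)" using t' unfolding \<phi>_def by simp
        have Lh: "L * sqrt (h \<tau>) = \<phi> \<tau> * h \<tau>"
          unfolding ph using hp by (simp add: field_simps real_sqrt_mult[symmetric])
        have d: "((\<lambda>t. Q t j) has_real_derivative \<alpha> j * (L * sqrt (h \<tau>))) (at \<tau>)"
          unfolding Q_def using md[OF t'] by (auto intro!: derivative_eq_intros)
        have "\<alpha> j * (L * sqrt (h \<tau>)) =
            - (\<Sum>k<n. (\<psi> \<tau> k - \<psi> \<tau> j) * K j k * log_mean (Q \<tau> j) (Q \<tau> k))"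
        proof (cases "j = i")
          case True
          have "(\<Sum>k<n. (\<psi> \<tau> k - \<psi> \<tau> j) * K j k * log_mean (Q \<tau> j) (Q \<tau> k))
              = (\<psi> \<tau> (i+1) - \<psi> \<tau> j) * K j (i+1) * log_mean (Q \<tau> j) (Q \<tau> (i+1))"
            by (rule sum_single) (use i True in \<open>auto simp: \<psi>_def\<close>)
          also have "\<dots> = \<phi> \<tau> * h \<tau> / \<pi> i"
            using True lmh[OF t] pi0 by (simp add: \<psi>_def field_simps)
          finally show ?thesis using True Lh pi0 by (simp add: \<alpha>_def)
        next
          case False
          note ni = False
          show ?thesis
          proof (cases "j = i + 1")
            case True
            have "(\<Sum>k<n. (\<psi> \<tau> k - \<psi> \<tau> j) * K j k * log_mean (Q \<tau> j) (Q \<tau> k))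
                = (\<psi> \<tau> i - \<psi> \<tau> j) * K j i * log_mean (Q \<tau> j) (Q \<tau> i)"
            proof (rule sum_single)
              fix k assume k: "k \<in> {..<n}" "k \<noteq> i"
              show "(\<psi> \<tau> k - \<psi> \<tau> j) * K j k * log_mean (Q \<tau> j) (Q \<tau> k) = 0"
              proof (cases "k = i + 1")
                case True then show ?thesis using \<open>j = i + 1\<close> by simp
              next
                case False
                then have "Q \<tau> k = 0" using k by (simp add: Qo)
                then show ?thesis using Qnn[OF t, of j] by (simp add: lm_zero2)
              qed
            qed (use i in auto)
            also have "\<dots> = - (\<phi> \<tau> * h \<tau> / \<pi> (i+1))"
              using True lmh'[OF t] pi0 by (simp add: \<psi>_def field_simps)
            finally show ?thesis using True Lh pi0 by (simp add: \<alpha>_def)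
          next
            case False
            have "(\<Sum>k<n. (\<psi> \<tau> k - \<psi> \<tau> j) * K j k * log_mean (Q \<tau> j) (Q \<tau> k)) = 0"
            proof (rule sum.neutral, rule ballI)
              fix k assume k: "k \<in> {..<n}"
              have "Q \<tau> j = 0" using ni False by (simp add: Qo)
              then show "(\<psi> \<tau> k - \<psi> \<tau> j) * K j k * log_mean (Q \<tau> j) (Q \<tau> k) = 0"
                using Qnn[OF t, of k] by (simp add: lm_zero1)
            qed
            then show ?thesis using ni False by (simp add: \<alpha>_def)
          qed
        qed
        then show "((\<lambda>t. Q t j) has_real_derivative
          - (\<Sum>k<n. (\<psi> \<tau> k - \<psi> \<tau> j) * K j k * log_mean (Q \<tau> j) (Q \<tau> k))) (at \<tau>)"
          using d by simp
      qed
    qed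
  next
    fix j assume "j < n"
    show "Q 0 j = unit_vec i j / \<pi> j"
      using mm_0[OF pq] by (simp add: Q_def m_def \<alpha>_def \<beta>_def unit_vec_def)
    show "Q 1 j = unit_vec (i+1) j / \<pi> j"
      using mm_1[OF pq] by (simp add: Q_def m_def \<alpha>_def \<beta>_def unit_vec_def)
  qed
  have dens: "(1/2) * (\<Sum>j<n. \<Sum>k<n. (\<psi> \<tau> j - \<psi> \<tau> k)\<^sup>2 * K j k * log_mean (Q \<tau> j) (Q \<tau> k) * \<pi> j)
      = L\<^sup>2" if t': "\<tau> \<in> {0<..<1}" for \<tau>
  proof -
    have t: "\<tau> \<in> {0..1}" using t' by auto
    have hp: "h \<tau> > 0" using hpos t' by auto
    have ph: "\<phi> \<tau> = L / sqrt (h \<tau>)" using t' unfolding \<phi>_def by simp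
    have "(\<Sum>j<n. \<Sum>k<n. (\<psi> \<tau> j - \<psi> \<tau> k)\<^sup>2 * K j k * log_mean (Q \<tau> j) (Q \<tau> k) * \<pi> j)
      = (\<psi> \<tau> i - \<psi> \<tau> (i+1))\<^sup>2 * K i (i+1) * log_mean (Q \<tau> i) (Q \<tau> (i+1)) * \<pi> i
        + (\<psi> \<tau> (i+1) - \<psi> \<tau> i)\<^sup>2 * K (i+1) i * log_mean (Q \<tau> (i+1)) (Q \<tau> i) * \<pi> (i+1)"
    proof (rule dsum_two)
      fix j k assume jk: "j < n" "k < n" "\<not> ((j = i \<and> k = i + 1) \<or> (j = i + 1 \<and> k = i))"
      show "(\<psi> \<tau> j - \<psi> \<tau> k)\<^sup>2 * K j k * log_mean (Q \<tau> j) (Q \<tau> k) * \<pi> j = 0"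
      proof (cases "j = i + 1")
        case True
        then show ?thesis
        proof (cases "k = i + 1")
          case False
          then have "Q \<tau> k = 0" using jk True by (simp add: Qo)
          then show ?thesis using Qnn[OF t, of j] by (simp add: lm_zero2)
        qed simp
      next
        case False
        note nj = False
        show ?thesis
        proof (cases "k = i + 1")
          case True
          then have "Q \<tau> j = 0" using jk nj by (simp add: Qo)
          then show ?thesis using Qnn[OF t, of k] by (simp add: lm_zero1)
        next
          case False
          then show ?thesis using nj by (simp add: \<psi>_def)
        qed
      qed
    qed (use i in auto)
    also have "\<dots> = (\<phi> \<tau>)\<^sup>2 * (\<pi> i * ?q * log_mean (Q \<tau> i) (Q \<tau> (i+1)))
        + (\<phi> \<tau>)\<^sup>2 * (\<pi> (i+1) * ?p * log_mean (Q \<tau> (i+1)) (Q \<tau> i))"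
      by (simp add: \<psi>_def power2_commute algebra_simps)
    also have "\<dots> = 2 * ((\<phi> \<tau>)\<^sup>2 * h \<tau>)" using lmh[OF t] lmh'[OF t] by simp
    also have "(\<phi> \<tau>)\<^sup>2 * h \<tau> = L\<^sup>2" unfolding ph using hp by (simp add: power_divide)
    finally show ?thesis by simp
  qed
  have "action n K \<pi> Q \<psi> = (\<integral>\<^sup>+ \<tau>. ennreal (L\<^sup>2) * indicator {0..1::real} \<tau> \<partial>lborel)"
    unfolding action_def
  proof (rule nn_integral_cong_AE)
    show "AE \<tau> in lborel. ennreal ((1/2) * (\<Sum>j<n. \<Sum>k<n. (\<psi> \<tau> j - \<psi> \<tau> k)\<^sup>2 * K j k
                  * log_mean (Q \<tau> j) (Q \<tau> k) * \<pi> j)) * indicator {0..1} \<tau> = ennreal (L\<^sup>2) * indicator {0..1} \<tau>"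
      using AE_lborel_singleton[of 0] AE_lborel_singleton[of 1]
    proof eventually_elim
      case (elim \<tau>)
      show ?case
      proof (cases "\<tau> \<in> {0..1}")
        case True
        then have "\<tau> \<in> {0<..<1}" using elim by auto
        then show ?thesis using dens by simp
      qed simp
    qed
  qed
  also have "\<dots> = ennreal (L\<^sup>2)" by (simp add: nn_integral_cmult_indicator)
  finally show ?thesis using adm unfolding L_def by blast
qed


theorem lemma6:
  fixes n :: nat and K :: "nat \<Rightarrow> nat \<Rightarrow> real" and \<pi> :: "nat \<Rightarrow> real" and i :: nat
  assumes "tridiagonal n K"
    and "irreducible_mat n K"
    and "row_stochastic n K"
    and "reversible_wrt n K \<pi>"
    and "i + 1 < n"
  shows "W_N_prob n K \<pi> (unit_vec i) (unit_vec (i + 1)) =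
         (LINT r:{0..1}|lborel. 1 / sqrt (log_mean (K (i + 1) i * r) (K i (i + 1) * (1 - r))))"
proof -
  let ?p = "K (i+1) i" and ?q = "K i (i+1)"
  have pq: "?p > 0" "?q > 0" using edge_pos[OF assms] by auto
  define L where "L = GG ?p ?q 1"
  have Lpos: "L > 0" unfolding L_def by (rule L_pos[OF pq])
  have W: "W_N_sq_dens n K \<pi> (\<lambda>j. unit_vec i j / \<pi> j) (\<lambda>j. unit_vec (i+1) j / \<pi> j) = ennreal (L\<^sup>2)"
    unfolding W_N_sq_dens_def
  proof (rule antisym)
    obtain Q \<psi> where adm: "admissible_path n K \<pi> (\<lambda>j. unit_vec i j / \<pi> j) (\<lambda>j. unit_vec (i+1) j / \<pi> j) Q \<psi>"
      and act: "action n K \<pi> Q \<psi> = ennreal (L\<^sup>2)"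
      using upper_bound[OF assms] unfolding L_def by blast
    show "(INF p \<in> {(Q, \<psi>). admissible_path n K \<pi> (\<lambda>j. unit_vec i j / \<pi> j) (\<lambda>j. unit_vec (i+1) j / \<pi> j) Q \<psi>}.
            action n K \<pi> (fst p) (snd p)) \<le> ennreal (L\<^sup>2)"
      by (rule INF_lower2[of "(Q, \<psi>)"]) (use adm act in auto)
    show "ennreal (L\<^sup>2) \<le> (INF p \<in> {(Q, \<psi>). admissible_path n K \<pi> (\<lambda>j. unit_vec i j / \<pi> j) (\<lambda>j. unit_vec (i+1) j / \<pi> j) Q \<psi>}.
            action n K \<pi> (fst p) (snd p))"
    proof (rule INF_greatest)
      fix x assume "x \<in> {(Q, \<psi>). admissible_path n K \<pi> (\<lambda>j. unit_vec i j / \<pi> j) (\<lambda>j. unit_vec (i+1) j / \<pi> j) Q \<psi>}"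
      then obtain Q \<psi> where x: "x = (Q, \<psi>)"
        and adm: "admissible_path n K \<pi> (\<lambda>j. unit_vec i j / \<pi> j) (\<lambda>j. unit_vec (i+1) j / \<pi> j) Q \<psi>"
        by blast
      show "ennreal (L\<^sup>2) \<le> action n K \<pi> (fst x) (snd x)"
        unfolding x L_def using lower_bound[OF assms adm] by simp
    qed
  qed
  have "W_N_prob n K \<pi> (unit_vec i) (unit_vec (i + 1)) = sqrt (L\<^sup>2)"
    unfolding W_N_prob_def W_N_dens_def W by simp
  also have "\<dots> = L" using Lpos by simp
  also have "\<dots> = (LINT r:{0..1}|lborel. gg ?p ?q r)" unfolding L_def by (rule GG_1[OF pq])
  also have "\<dots> = (LINT r:{0..1}|lborel. 1 / sqrt (log_mean (K (i + 1) i * r) (K i (i + 1) * (1 - r))))"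
    by (simp add: gg_def hh_def)
  finally show ?thesis .
qed

end
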